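(* Let $X$ be a finite set and let $\tau$ be a non-empty subset of $\binom{X}{2}$. Then $\tau$ is thin (i.e. $|L(\tau')|\ge|\tau'|+1$ for every non-empty $\tau'\subseteq\tau$) if and only if $\tau$ is total-order flexible.
   Context: $L(\tau)=\bigcup_{s\in\tau}s$. A non-empty $\tau\subseteq\binom{X}{2}$ is total-order flexible if for every choice, for each $\{x,y\}\in\tau$, of one of $x\prec y$ or $y\prec x$, there exists a total order on $X$ agreeing with all chosen relations. *)

theory Defs
  imports Main
begin

definition two_subsets :: "'a set \<Rightarrow> 'a set set" where
  "two_subsets X = {s. s \<subseteq> X \<and> card s = 2}"

definition L :: "'a set set \<Rightarrow> 'a set" where
  "L \<tau> = \<Union> \<tau>"

definition thin :: "'a set set \<Rightarrow> bool" where
  "thin \<tau> \<longleftrightarrow> (\<forall>\<tau>'. \<tau>' \<noteq> {} \<and> \<tau>' \<subseteq> \<tau> \<longrightarrow> card (L \<tau>') \<ge> card \<tau>' + 1)"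

text \<open>An orientation chooses, for each pair {x,y} in tau, an ordered pair (x,y) or (y,x),
  meaning x \<prec> y resp. y \<prec> x.\<close>
definition orientation :: "'a set set \<Rightarrow> ('a set \<Rightarrow> 'a \<times> 'a) \<Rightarrow> bool" where
  "orientation \<tau> c \<longleftrightarrow> (\<forall>s\<in>\<tau>. s = {fst (c s), snd (c s)})"

text \<open>Total-order flexible: for every orientation there is a (reflexive) linear order r
  on X such that every chosen relation x \<prec> y holds, i.e. (x,y) \<in> r with x \<noteq> y.\<close>
definition total_order_flexible :: "'a set \<Rightarrow> 'a set set \<Rightarrow> bool" where
  "total_order_flexible X \<tau> \<longleftrightarrow>
     (\<forall>c. orientation \<tau> c \<longrightarrow>
        (\<exists>r. linear_order_on X r \<and> (\<forall>s\<in>\<tau>. c s \<in> r)))"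

end

theory Submission
  imports Defs
begin

definition deg :: "'a set set \<Rightarrow> 'a \<Rightarrow> nat" where
  "deg E v = card {s\<in>E. v \<in> s}"

lemma handshake_gen:
  assumes "finite E" "finite A" "\<Union>E \<subseteq> A" "\<forall>s\<in>E. finite s"
  shows "(\<Sum>v\<in>A. deg E v) = (\<Sum>s\<in>E. card s)"
  using assms
proof (induction E rule: finite_induct)
  case empty
  then show ?case by (simp add: deg_def)
next
  case (insert e F)
  have d: "deg (insert e F) v = deg F v + (if v \<in> e then 1 else 0)" for v
  proof -
    have "{s\<in>insert e F. v \<in> s} = (if v \<in> e then insert e {s\<in>F. v \<in> s} else {s\<in>F. v \<in> s})"
      by auto
    then show ?thesis using insert.hyps by (simp add: deg_def)
  qed
  have "(\<Sum>v\<in>A. deg (insert e F) v) = (\<Sum>v\<in>A. deg F v) + (\<Sum>v\<in>A. (if v \<in> e then 1 else 0))"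
    by (simp add: d sum.distrib)
  also have "(\<Sum>v\<in>A. (if v \<in> e then 1::nat else 0)) = card (A \<inter> e)"
    using insert.prems(1) by (simp add: sum.If_cases)
  also have "A \<inter> e = e" using insert.prems by auto
  finally show ?case using insert by simp
qed

lemma handshake:
  assumes "finite E" "\<forall>s\<in>E. card s = 2"
  shows "(\<Sum>v\<in>L E. deg E v) = 2 * card E"
proof -
  have fs: "\<forall>s\<in>E. finite s"
  proof
    fix s assume "s \<in> E" then show "finite s" by (metis assms(2) card.infinite zero_neq_numeral)
  qed
  have "finite (L E)" using assms(1) fs by (simp add: L_def)
  then have "(\<Sum>v\<in>L E. deg E v) = (\<Sum>s\<in>E. card s)"
    using handshake_gen[OF assms(1) _ _ fs] by (simp add: L_def)
  also have "\<dots> = 2 * card E" using assms(2) by simp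
  finally show ?thesis .
qed

lemma lin_min:
  assumes "linear_order_on X r" "v \<in> X"
  shows "linear_order_on X ({p\<in>r. fst p \<noteq> v \<and> snd p \<noteq> v} \<union> {v}\<times>X)"
    (is "linear_order_on X ?r")
proof -
  have sub: "r \<subseteq> X \<times> X" and rf: "\<forall>x\<in>X. (x,x) \<in> r" and tr: "trans r" and an: "antisym r"
    and to: "total_on X r"
    using assms(1) unfolding linear_order_on_def partial_order_on_def preorder_on_def refl_on_def by auto
  have "?r \<subseteq> X \<times> X" using sub assms(2) by auto
  moreover have "refl_on X ?r" using rf unfolding refl_on_def by auto
  moreover have "trans ?r" using tr sub unfolding trans_def by auto
  moreover have "antisym ?r" using an unfolding antisym_def by auto
  moreover have "total_on X ?r" using to unfolding total_on_def by auto
  ultimately show ?thesis unfolding linear_order_on_def partial_order_on_def preorder_on_def by blast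
qed

lemma lin_max:
  assumes "linear_order_on X r" "v \<in> X"
  shows "linear_order_on X ({p\<in>r. fst p \<noteq> v \<and> snd p \<noteq> v} \<union> X\<times>{v})"
    (is "linear_order_on X ?r")
proof -
  have sub: "r \<subseteq> X \<times> X" and rf: "\<forall>x\<in>X. (x,x) \<in> r" and tr: "trans r" and an: "antisym r"
    and to: "total_on X r"
    using assms(1) unfolding linear_order_on_def partial_order_on_def preorder_on_def refl_on_def by auto
  have "?r \<subseteq> X \<times> X" using sub assms(2) by auto
  moreover have "refl_on X ?r" using rf unfolding refl_on_def by auto
  moreover have "trans ?r" using tr sub unfolding trans_def by auto
  moreover have "antisym ?r" using an unfolding antisym_def by auto
  moreover have "total_on X ?r" using to unfolding total_on_def by auto
  ultimately show ?thesis unfolding linear_order_on_def partial_order_on_def preorder_on_def by blast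
qed

lemma lin_least:
  assumes "linear_order_on X r" "finite W" "W \<noteq> {}" "W \<subseteq> X"
  shows "\<exists>m\<in>W. \<forall>w\<in>W. (m,w) \<in> r"
  using assms(2,3,4)
proof (induction W rule: finite_ne_induct)
  case (singleton x)
  then show ?case using assms(1) unfolding linear_order_on_def partial_order_on_def preorder_on_def refl_on_def by auto
next
  case (insert x F)
  then obtain m where m: "m \<in> F" "\<forall>w\<in>F. (m,w) \<in> r" by auto
  show ?case
  proof (cases "(m,x) \<in> r")
    case True then show ?thesis using m by auto
  next
    case False
    then have "(x,m) \<in> r" using assms(1) insert m unfolding linear_order_on_def partial_order_on_def preorder_on_def refl_on_def total_on_def
      by (metis in_mono insert_subset)
    then have "\<forall>w\<in>F. (x,w) \<in> r" using m assms(1) unfolding linear_order_on_def partial_order_on_def preorder_on_def trans_def by blast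
    then show ?thesis using \<open>(x,m) \<in> r\<close> assms(1) insert unfolding linear_order_on_def partial_order_on_def preorder_on_def refl_on_def by auto
  qed
qed

lemma card2_fin: "card s = 2 \<Longrightarrow> finite s"
  by (metis card.infinite zero_neq_numeral)

lemma leaf:
  assumes "finite \<tau>" "\<forall>s\<in>\<tau>. card s = 2" "thin \<tau>" "\<tau> \<noteq> {}"
  shows "\<exists>e\<in>\<tau>. \<exists>v\<in>e. \<forall>s\<in>\<tau>. v \<in> s \<longrightarrow> s = e"
proof -
  have fin: "finite (L \<tau>)" using assms(1,2) card2_fin by (auto simp: L_def)
  have big: "card (L \<tau>) \<ge> card \<tau> + 1" using assms(3,4) unfolding thin_def by blast
  have "\<exists>v\<in>L \<tau>. deg \<tau> v < 2"
  proof (rule ccontr)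
    assume "\<not> ?thesis"
    then have "\<forall>v\<in>L \<tau>. 2 \<le> deg \<tau> v" by auto
    then have "(\<Sum>v\<in>L \<tau>. 2) \<le> (\<Sum>v\<in>L \<tau>. deg \<tau> v)" by (intro sum_mono) auto
    then have "2 * card (L \<tau>) \<le> 2 * card \<tau>" using handshake[OF assms(1,2)] by simp
    then show False using big by simp
  qed
  then obtain v where v: "v \<in> L \<tau>" "deg \<tau> v < 2" by auto
  then obtain e where e: "e \<in> \<tau>" "v \<in> e" by (auto simp: L_def)
  have fin2: "finite {s\<in>\<tau>. v \<in> s}" using assms(1) by auto
  have "card {s\<in>\<tau>. v \<in> s} \<le> Suc 0" using v(2) by (simp add: deg_def)
  then have all: "\<forall>a\<in>{s\<in>\<tau>. v \<in> s}. \<forall>b\<in>{s\<in>\<tau>. v \<in> s}. a = b"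
    using card_le_Suc0_iff_eq[OF fin2] by blast
  have "\<forall>s\<in>\<tau>. v \<in> s \<longrightarrow> s = e"
  proof (intro ballI impI)
    fix s assume "s \<in> \<tau>" "v \<in> s"
    then show "s = e" using all e by blast
  qed
  then show ?thesis using e by blast
qed

lemma orientationD:
  assumes "orientation \<tau> c" "s \<in> \<tau>"
  shows "s = {fst (c s), snd (c s)}"
  using assms(1) unfolding orientation_def using assms(2) by (rule bspec)

lemma orientation_mono:
  assumes "orientation \<tau> c" "\<sigma> \<subseteq> \<tau>"
  shows "orientation \<sigma> c"
  unfolding orientation_def
proof
  fix s assume "s \<in> \<sigma>"
  then have "s \<in> \<tau>" using assms(2) by blast
  then show "s = {fst (c s), snd (c s)}" by (rule orientationD[OF assms(1)])
qed

lemma pair_mem: "s = {a,b} \<Longrightarrow> a \<in> s \<and> b \<in> s" by auto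
lemma pair_notin: "s = {a,b} \<Longrightarrow> v \<notin> s \<Longrightarrow> a \<noteq> v \<and> b \<noteq> v" by auto
lemma pair_other: "s = {a,b} \<Longrightarrow> v \<in> s \<Longrightarrow> a \<noteq> v \<Longrightarrow> b = v" by auto

lemma thin_subset: "thin \<tau> \<Longrightarrow> \<sigma> \<subseteq> \<tau> \<Longrightarrow> thin \<sigma>"
  unfolding thin_def by blast

lemma dir1:
  assumes "finite X" "\<tau> \<subseteq> two_subsets X" "thin \<tau>" "orientation \<tau> c"
  shows "\<exists>r. linear_order_on X r \<and> (\<forall>s\<in>\<tau>. c s \<in> r)"
  using assms(2,3,4)
proof (induction "card \<tau>" arbitrary: \<tau> rule: less_induct)
  case less
  have "\<tau> \<subseteq> Pow X" using less.prems(1) by (auto simp: two_subsets_def)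
  then have finT: "finite \<tau>" using assms(1) by (meson finite_Pow_iff finite_subset)
  have c2: "\<forall>s\<in>\<tau>. card s = 2" and sX: "\<forall>s\<in>\<tau>. s \<subseteq> X"
    using less.prems(1) by (auto simp: two_subsets_def)
  show ?case
  proof (cases "\<tau> = {}")
    case True
    obtain r where "well_order_on X r" using well_order_on by blast
    then show ?thesis using True unfolding well_order_on_def by auto
  next
    case False
    obtain e v where ev: "e \<in> \<tau>" "v \<in> e" "\<forall>s\<in>\<tau>. v \<in> s \<longrightarrow> s = e"
      using leaf[OF finT c2 less.prems(2) False] by blast
    let ?t = "\<tau> - {e}"
    have "card ?t < card \<tau>" using ev(1) finT by (metis card_Diff1_less)
    moreover have "?t \<subseteq> two_subsets X" using less.prems(1) by auto
    moreover have "thin ?t" by (rule thin_subset[OF less.prems(2)]) auto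
    moreover have "orientation ?t c" using orientation_mono[OF less.prems(3)] by blast
    ultimately have "\<exists>r. linear_order_on X r \<and> (\<forall>s\<in>?t. c s \<in> r)"
      by (rule less.hyps)
    then obtain r where r: "linear_order_on X r" "\<forall>s\<in>?t. c s \<in> r" by blast
    have ce: "e = {fst (c e), snd (c e)}" using orientationD[OF less.prems(3) ev(1)] .
    have eX: "e \<subseteq> X" using sX ev(1) by blast
    have vX: "v \<in> X" using eX ev(2) by blast
    have fX: "fst (c e) \<in> X" and sX': "snd (c e) \<in> X" using eX pair_mem[OF ce] by blast+
    have others: "\<forall>s\<in>?t. fst (c s) \<noteq> v \<and> snd (c s) \<noteq> v"
    proof
      fix s assume s: "s \<in> ?t"
      then have "s \<in> \<tau>" by blast
      have "v \<notin> s" using ev(3) s by blast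
      then show "fst (c s) \<noteq> v \<and> snd (c s) \<noteq> v" using pair_notin[OF orientationD[OF less.prems(3) \<open>s \<in> \<tau>\<close>]] by blast
    qed
    show ?thesis
    proof (cases "fst (c e) = v")
      case True
      let ?r = "{p\<in>r. fst p \<noteq> v \<and> snd p \<noteq> v} \<union> {v}\<times>X"
      have h1: "linear_order_on X ?r" using lin_min[OF r(1) vX] .
      have h2: "\<forall>s\<in>\<tau>. c s \<in> ?r"
      proof
        fix s assume s: "s \<in> \<tau>"
        show "c s \<in> ?r"
        proof (cases "s = e")
          case True
          show ?thesis using True sX' \<open>fst (c e) = v\<close> by (simp add: mem_Times_iff)
        next
          case False
          then have "c s \<in> r" "fst (c s) \<noteq> v" "snd (c s) \<noteq> v" using s r(2) others by blast+
          then show ?thesis by simp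
        qed
      qed
      show ?thesis using h1 h2 by (intro exI[of _ ?r]) simp
    next
      case False
      then have "snd (c e) = v" using pair_other[OF ce ev(2)] by blast
      let ?r = "{p\<in>r. fst p \<noteq> v \<and> snd p \<noteq> v} \<union> X\<times>{v}"
      have h1: "linear_order_on X ?r" using lin_max[OF r(1) vX] .
      have h2: "\<forall>s\<in>\<tau>. c s \<in> ?r"
      proof
        fix s assume s: "s \<in> \<tau>"
        show "c s \<in> ?r"
        proof (cases "s = e")
          case True
          show ?thesis using True fX \<open>snd (c e) = v\<close> by (simp add: mem_Times_iff)
        next
          case False
          then have "c s \<in> r" "fst (c s) \<noteq> v" "snd (c s) \<noteq> v" using s r(2) others by blast+
          then show ?thesis by simp
        qed
      qed
      show ?thesis using h1 h2 by (intro exI[of _ ?r]) simp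
    qed
  qed
qed

definition good :: "'a set set \<Rightarrow> ('a set \<Rightarrow> 'a \<times> 'a) \<Rightarrow> 'a set \<Rightarrow> bool" where
  "good E c W \<longleftrightarrow> W \<noteq> {} \<and> (\<forall>w\<in>W. \<exists>s\<in>E. snd (c s) = w \<and> fst (c s) \<in> W)"

definition opick :: "'a set \<Rightarrow> 'a \<times> 'a" where
  "opick s = (SOME p. s = {fst p, snd p})"

lemma opick: assumes "card s = 2" shows "s = {fst (opick s), snd (opick s)}"
proof -
  obtain x y where xy: "s = {x,y}" using card_2_iff[THEN iffD1, OF assms] by blast
  have "s = {fst (x,y), snd (x,y)}" using xy by simp
  then have "\<exists>p. s = {fst p, snd p}" by (rule exI)
  from someI_ex[OF this] show ?thesis unfolding opick_def .
qed

lemma pair_eq: "c s = p \<Longrightarrow> s = {fst p, snd p} \<Longrightarrow> s = {fst (c s), snd (c s)}" by simp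

lemma extend_one:
  assumes "orientation (E - {e}) c'" "good (E - {e}) c' W" "card e = 2"
  shows "orientation E (c'(e := opick e)) \<and> good E (c'(e := opick e)) W"
proof
  show "orientation E (c'(e := opick e))"
    unfolding orientation_def
  proof
    fix s assume s: "s \<in> E"
    show "s = {fst ((c'(e := opick e)) s), snd ((c'(e := opick e)) s)}"
    proof (cases "s = e")
      case True
      show ?thesis unfolding True by (rule pair_eq[OF _ opick[OF assms(3)]]) simp
    next
      case False
      then have "s \<in> E - {e}" using s by blast
      show ?thesis by (rule pair_eq[OF _ orientationD[OF assms(1) \<open>s \<in> E - {e}\<close>]]) (simp add: False)
    qed
  qed
  show "good E (c'(e := opick e)) W"
    unfolding good_def
  proof (intro conjI ballI)
    show "W \<noteq> {}" using assms(2) unfolding good_def by blast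
    fix w assume "w \<in> W"
    then obtain s where s: "s \<in> E - {e}" "snd (c' s) = w" "fst (c' s) \<in> W"
      using assms(2) unfolding good_def by blast
    then show "\<exists>s\<in>E. snd ((c'(e := opick e)) s) = w \<and> fst ((c'(e := opick e)) s) \<in> W"
      by (intro bexI[of _ s]) auto
  qed
qed

lemma uniq_edge:
  assumes "finite E" "v \<in> L E" "deg E v \<le> 1"
  shows "\<exists>e\<in>E. v \<in> e \<and> (\<forall>s\<in>E. v \<in> s \<longrightarrow> s = e)"
proof -
  obtain e where e: "e \<in> E" "v \<in> e" using assms(2) by (auto simp: L_def)
  have fin2: "finite {s\<in>E. v \<in> s}" using assms(1) by auto
  have "card {s\<in>E. v \<in> s} \<le> Suc 0" using assms(3) by (simp add: deg_def)
  then have all: "\<forall>a\<in>{s\<in>E. v \<in> s}. \<forall>b\<in>{s\<in>E. v \<in> s}. a = b"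
    using card_le_Suc0_iff_eq[OF fin2] by blast
  have "\<forall>s\<in>E. v \<in> s \<longrightarrow> s = e"
  proof (intro ballI impI)
    fix s assume "s \<in> E" "v \<in> s"
    then show "s = e" using all e by blast
  qed
  then show ?thesis using e by blast
qed

lemma card2_other: assumes "card s = 2" "v \<in> s" shows "\<exists>a. a \<noteq> v \<and> s = {v,a}"
proof -
  obtain x y where xy: "x \<noteq> y" "s = {x,y}" using card_2_iff[THEN iffD1, OF assms(1)] by blast
  show ?thesis
  proof (cases "v = x")
    case True then show ?thesis using xy by (intro exI[of _ y]) simp
  next
    case False then have "v = y" using xy assms(2) by blast
    then show ?thesis using xy by (intro exI[of _ x]) (auto simp: insert_commute)
  qed
qed

lemma fin_L: "finite E \<Longrightarrow> \<forall>s\<in>E. card s = 2 \<Longrightarrow> finite (L E)"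
  using card2_fin by (auto simp: L_def)

lemma cyc:
  assumes "finite E" "\<forall>s\<in>E. card s = 2" "E \<noteq> {}" "card (L E) \<le> card E"
  shows "\<exists>c W. orientation E c \<and> good E c W"
  using assms
proof (induction "card E" arbitrary: E rule: less_induct)
  case less
  note finE = less.prems(1) and c2 = less.prems(2) and ne = less.prems(3) and sm = less.prems(4)
  have finV: "finite (L E)" using fin_L[OF finE c2] .
  show ?case
  proof (cases "\<exists>v\<in>L E. deg E v \<le> 1")
    case True
    then obtain v where v: "v \<in> L E" "deg E v \<le> 1" by blast
    obtain e where e: "e \<in> E" "v \<in> e" "\<forall>s\<in>E. v \<in> s \<longrightarrow> s = e"
      using uniq_edge[OF finE v] by blast
    let ?E = "E - {e}"
    have sub: "L ?E \<subseteq> L E - {v}" using e(3) by (auto simp: L_def)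
    have "card (L ?E) \<le> card (L E - {v})" using card_mono[OF _ sub] finV by blast
    also have "\<dots> = card (L E) - 1" using v(1) finV by simp
    finally have c1: "card (L ?E) \<le> card (L E) - 1" .
    have cE: "card ?E = card E - 1" using e(1) finE by simp
    have "E \<noteq> {e}"
    proof
      assume "E = {e}"
      then have "L E = e" by (simp add: L_def)
      then show False using sm c2 e(1) \<open>E = {e}\<close> by simp
    qed
    then have neE: "?E \<noteq> {}" using e(1) by blast
    have h1: "card ?E < card E" using e(1) finE by (metis card_Diff1_less)
    have h2: "finite ?E" using finE by simp
    have h3: "\<forall>s\<in>?E. card s = 2" using c2 by simp
    have h4: "card (L ?E) \<le> card ?E" using c1 cE sm by linarith
    have "\<exists>c W. orientation ?E c \<and> good ?E c W" by (rule less.hyps[OF h1 h2 h3 neE h4])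
    then obtain c' W where "orientation ?E c'" "good ?E c' W" by blast
    from extend_one[OF this c2[rule_format, OF e(1)]] show ?thesis by blast
  next
    case notA: False
    show ?thesis
    proof (cases "\<exists>v\<in>L E. deg E v = 2")
      case True
      then obtain v where v: "v \<in> L E" "deg E v = 2" by blast
      have cv: "card {s\<in>E. v \<in> s} = 2" using v(2) by (simp add: deg_def)
      obtain e1 e2 where ee: "{s\<in>E. v \<in> s} = {e1,e2}" "e1 \<noteq> e2"
        using card_2_iff[THEN iffD1, OF cv] by blast
      have "e1 \<in> {s\<in>E. v \<in> s}" "e2 \<in> {s\<in>E. v \<in> s}" unfolding ee(1) by simp_all
      then have e1: "e1 \<in> E" "v \<in> e1" and e2: "e2 \<in> E" "v \<in> e2" by simp_all
      have only: "\<forall>s\<in>E. v \<in> s \<longrightarrow> s = e1 \<or> s = e2"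
      proof (intro ballI impI)
        fix s assume "s \<in> E" "v \<in> s"
        then have "s \<in> {s\<in>E. v \<in> s}" by simp
        then show "s = e1 \<or> s = e2" unfolding ee(1) by simp
      qed
      obtain a where a: "a \<noteq> v" "e1 = {v,a}" using card2_other[OF c2[rule_format, OF e1(1)] e1(2)] by blast
      obtain b where b: "b \<noteq> v" "e2 = {v,b}" using card2_other[OF c2[rule_format, OF e2(1)] e2(2)] by blast
      have ab: "a \<noteq> b"
      proof
        assume "a = b" then have "e1 = e2" using a(2) b(2) by simp
        then show False using ee(2) by simp
      qed
      have vab: "v \<notin> {a,b}" using a(1) b(1) by auto
      have ab1: "{a,b} \<noteq> e1" "{a,b} \<noteq> e2" using vab e1(2) e2(2) by auto
      show ?thesis
      proof (cases "{a,b} \<in> E")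
        case True
        define c where "c = (\<lambda>s. if s = e1 then (v,a) else if s = e2 then (b,v) else if s = {a,b} then (a,b) else opick s)"
        have "orientation E c"
          unfolding orientation_def
        proof
          fix s assume s: "s \<in> E"
          show "s = {fst (c s), snd (c s)}"
          proof (cases "s = e1")
            case True then show ?thesis using a by (simp add: c_def)
          next
            case F1: False
            show ?thesis
            proof (cases "s = e2")
              case True then show ?thesis using b F1 by (simp add: c_def insert_commute)
            next
              case F2: False
              show ?thesis
              proof (cases "s = {a,b}")
                case True then show ?thesis using F1 F2 by (simp add: c_def)
              next
                case False then show ?thesis using F1 F2 by (intro pair_eq[OF _ opick[OF c2[rule_format, OF s]]]) (simp add: c_def)
              qed
            qed
          qed
        qed
        moreover have "good E c {v,a,b}"
          unfolding good_def
        proof (intro conjI ballI)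
          show "{v,a,b} \<noteq> {}" by blast
          fix w assume w: "w \<in> {v,a,b}"
          have ce1: "c e1 = (v,a)" by (simp add: c_def)
          have ce2: "c e2 = (b,v)" using ee(2) by (simp add: c_def)
          have cab: "c {a,b} = (a,b)" using ab1 by (simp add: c_def)
          have "w = v \<or> w = a \<or> w = b" using w by blast
          then show "\<exists>s\<in>E. snd (c s) = w \<and> fst (c s) \<in> {v,a,b}"
          proof (elim disjE)
            assume "w = v" then show ?thesis using ce2 e2(1) by (intro bexI[of _ e2]) auto
          next
            assume "w = a" then show ?thesis using ce1 e1(1) by (intro bexI[of _ e1]) auto
          next
            assume "w = b" then show ?thesis using cab True by (intro bexI[of _ "{a,b}"]) auto
          qed
        qed
        ultimately show ?thesis by blast
      next
        case False
        let ?E = "insert {a,b} (E - {e1,e2})"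
        have finE': "finite ?E" using finE by simp
        have c2': "\<forall>s\<in>?E. card s = 2" using c2 ab by auto
        have cE': "card ?E = card E - 1"
        proof -
          have "card (E - {e1,e2}) = card E - 2" using e1(1) e2(1) ee(2) finE
            by (simp add: card_Diff_subset)
          moreover have "card E \<ge> 2"
          proof -
            have "card {e1,e2} \<le> card E" using e1(1) e2(1) finE by (intro card_mono) auto
            then show ?thesis using ee(2) by simp
          qed
          ultimately show ?thesis using False finE by simp
        qed
        have LE': "L ?E = L E - {v}"
        proof
          show "L ?E \<subseteq> L E - {v}"
          proof
            fix u assume "u \<in> L ?E"
            then obtain s where s: "s \<in> ?E" "u \<in> s" by (auto simp: L_def)
            show "u \<in> L E - {v}"
            proof (cases "s = {a,b}")
              case True
              then have "u = a \<or> u = b" using s by blast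
              then show ?thesis using a b e1 e2 by (auto simp: L_def)
            next
              case False
              then have "s \<in> E" "s \<noteq> e1" "s \<noteq> e2" using s by auto
              then have "v \<notin> s" using only by blast
              then show ?thesis using s(2) \<open>s \<in> E\<close> by (auto simp: L_def)
            qed
          qed
          show "L E - {v} \<subseteq> L ?E"
          proof
            fix u assume u: "u \<in> L E - {v}"
            then obtain s where s: "s \<in> E" "u \<in> s" by (auto simp: L_def)
            show "u \<in> L ?E"
            proof (cases "s = e1 \<or> s = e2")
              case True
              then have "u = a \<or> u = b" using s u a b by blast
              then show ?thesis by (auto simp: L_def)
            next
              case False
              then show ?thesis using s by (auto simp: L_def)
            qed
          qed
        qed
        have "card (L ?E) = card (L E) - 1" using LE' v(1) finV by simp
        then have smE': "card (L ?E) \<le> card ?E" using cE' sm by linarith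
        have "card ?E < card E" using cE' e1(1) finE by (metis card_gt_0_iff diff_less empty_iff zero_less_one)
        moreover have "?E \<noteq> {}" by blast
        ultimately have "\<exists>c W. orientation ?E c \<and> good ?E c W" by (intro less.hyps[OF _ finE' c2' _ smE'])
        then obtain cs Ws where cs: "orientation ?E cs" "good ?E cs Ws" by blast
        define p where "p = cs {a,b}"
        have pab: "{a,b} = {fst p, snd p}" unfolding p_def by (rule orientationD[OF cs(1)]) simp
        have pcases: "p = (a,b) \<or> p = (b,a)"
        proof -
          have "fst p \<noteq> snd p" using pab ab by (metis doubleton_eq_iff)
          then show ?thesis using pab by (metis doubleton_eq_iff prod.collapse)
        qed
        define c where "c = (\<lambda>s. if s = e1 then (if p = (a,b) then (a,v) else (v,a))
             else if s = e2 then (if p = (a,b) then (v,b) else (b,v)) else cs s)"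
        define W where "W = (if fst p \<in> Ws then insert v Ws else Ws)"
        have ce1: "c e1 = (if p = (a,b) then (a,v) else (v,a))" by (simp add: c_def)
        have ce2: "c e2 = (if p = (a,b) then (v,b) else (b,v))" using ee(2) by (simp add: c_def)
        have cother: "c s = cs s" if "s \<noteq> e1" "s \<noteq> e2" for s using that by (simp add: c_def)
        have "orientation E c"
          unfolding orientation_def
        proof
          fix s assume s: "s \<in> E"
          show "s = {fst (c s), snd (c s)}"
          proof (cases "s = e1")
            case True then show ?thesis using a ce1 by auto
          next
            case F1: False
            show ?thesis
            proof (cases "s = e2")
              case True then show ?thesis using b ce2 by auto
            next
              case F2: False
              then have "s \<in> ?E" using s F1 by blast
              show ?thesis by (rule pair_eq[of c s "cs s", OF cother[OF F1 F2] orientationD[OF cs(1) \<open>s \<in> ?E\<close>]])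
            qed
          qed
        qed
        moreover have "good E c W"
          unfolding good_def
        proof (intro conjI ballI)
          have "Ws \<noteq> {}" using cs(2) unfolding good_def by blast
          then show "W \<noteq> {}" unfolding W_def by auto
          fix w assume w: "w \<in> W"
          have WsW: "Ws \<subseteq> W" unfolding W_def by auto
          show "\<exists>s\<in>E. snd (c s) = w \<and> fst (c s) \<in> W"
          proof (cases "w \<in> Ws")
            case True
            then obtain s where s: "s \<in> ?E" "snd (cs s) = w" "fst (cs s) \<in> Ws"
              using cs(2) unfolding good_def by blast
            show ?thesis
            proof (cases "s = {a,b}")
              case True
              then have vW: "v \<in> W" using s(3) unfolding W_def p_def by simp
              show ?thesis
              proof (cases "p = (a,b)")
                case True
                then have "w = b" using s(2) \<open>s = {a,b}\<close> unfolding p_def by simp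
                then show ?thesis using ce2 True vW e2(1) by (intro bexI[of _ e2]) auto
              next
                case False
                then have "p = (b,a)" using pcases by blast
                then have "w = a" using s(2) \<open>s = {a,b}\<close> unfolding p_def by simp
                then show ?thesis using ce1 False vW e1(1) by (intro bexI[of _ e1]) auto
              qed
            next
              case False
              then have "s \<in> E" "s \<noteq> e1" "s \<noteq> e2" using s(1) by auto
              then show ?thesis using cother[of s] s(2,3) WsW by (intro bexI[of _ s]) auto
            qed
          next
            case False
            then have wv: "w = v" and fW: "fst p \<in> Ws" using w unfolding W_def by (auto split: if_splits)
            show ?thesis
            proof (cases "p = (a,b)")
              case True
              then have "a \<in> W" using fW WsW by auto
              then show ?thesis using ce1 True wv e1(1) by (intro bexI[of _ e1]) auto
            next
              case False
              then have "p = (b,a)" using pcases by blast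
              then have "b \<in> W" using fW WsW by auto
              then show ?thesis using ce2 False wv e2(1) by (intro bexI[of _ e2]) auto
            qed
          qed
        qed
        ultimately show ?thesis by blast
      qed
    next
      case False
      then have d3: "\<forall>v\<in>L E. 3 \<le> deg E v" using notA by force
      then have "(\<Sum>v\<in>L E. 3) \<le> (\<Sum>v\<in>L E. deg E v)" by (intro sum_mono) auto
      then have "3 * card (L E) \<le> 2 * card E" using handshake[OF finE c2] by simp
      moreover obtain e where e: "e \<in> E" using ne by blast
      moreover have "L E \<noteq> {}"
      proof -
        obtain x y where "e = {x,y}" using card_2_iff[THEN iffD1, OF c2[rule_format, OF e]] by blast
        then have "x \<in> e" by simp
        then have "x \<in> L E" using e unfolding L_def by blast
        then show ?thesis by blast
      qed
      then have "card (L E) \<ge> 1" using finV by (simp add: Suc_leI card_gt_0_iff)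
      ultimately have big: "card (L E) < card E" by linarith
      let ?E = "E - {e}"
      have LE': "L ?E = L E"
      proof
        show "L ?E \<subseteq> L E" by (auto simp: L_def)
        show "L E \<subseteq> L ?E"
        proof
          fix u assume u: "u \<in> L E"
          have "\<not> (\<forall>s\<in>E. u \<in> s \<longrightarrow> s = e)"
          proof
            assume h: "\<forall>s\<in>E. u \<in> s \<longrightarrow> s = e"
            have "{s\<in>E. u \<in> s} \<subseteq> {e}" using h by blast
            then have "card {s\<in>E. u \<in> s} \<le> card {e}" by (intro card_mono) auto
            then have "card {s\<in>E. u \<in> s} \<le> 1" by simp
            then show False using d3 u unfolding deg_def by fastforce
          qed
          then obtain s where "s \<in> E" "u \<in> s" "s \<noteq> e" by blast
          then show "u \<in> L ?E" by (auto simp: L_def)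
        qed
      qed
      have cE: "card ?E = card E - 1" using e finE by simp
      have h1: "card ?E < card E" using e finE by (metis card_Diff1_less)
      have h2: "finite ?E" using finE by simp
      have h3: "\<forall>s\<in>?E. card s = 2" using c2 by simp
      have h4: "card (L ?E) \<le> card ?E" unfolding LE' cE using big by linarith
      have h5: "?E \<noteq> {}"
      proof
        assume h0: "?E = {}"
        have "card ?E = 0" unfolding h0 by simp
        then show False using big cE \<open>card (L E) \<ge> 1\<close> by linarith
      qed
      have "\<exists>c W. orientation ?E c \<and> good ?E c W" by (rule less.hyps[OF h1 h2 h3 h5 h4])
      then obtain c' W where "orientation ?E c'" "good ?E c' W" by blast
      from extend_one[OF this c2[rule_format, OF e]] show ?thesis by blast
    qed
  qed
qed

lemma pair_neq: "card s = 2 \<Longrightarrow> s = {a,b} \<Longrightarrow> a \<noteq> b" by auto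

lemma dir2:
  assumes "finite X" "\<tau> \<subseteq> two_subsets X" "total_order_flexible X \<tau>"
  shows "thin \<tau>"
  unfolding thin_def
proof (intro allI impI)
  fix \<sigma> assume h: "\<sigma> \<noteq> {} \<and> \<sigma> \<subseteq> \<tau>"
  show "card (L \<sigma>) \<ge> card \<sigma> + 1"
  proof (rule ccontr)
    assume "\<not> ?thesis"
    then have sm: "card (L \<sigma>) \<le> card \<sigma>" by simp
    have sP: "\<sigma> \<subseteq> Pow X" using assms(2) h by (auto simp: two_subsets_def)
    have fins: "finite \<sigma>" using sP assms(1) by (meson finite_Pow_iff finite_subset)
    have c2: "\<forall>s\<in>\<sigma>. card s = 2" using h assms(2) by (auto simp: two_subsets_def)
    have sne: "\<sigma> \<noteq> {}" using h by blast
    obtain c' W where cw: "orientation \<sigma> c'" "good \<sigma> c' W" using cyc[OF fins c2 sne sm] by blast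
    define c where "c = (\<lambda>s. if s \<in> \<sigma> then c' s else opick s)"
    have "orientation \<tau> c" unfolding orientation_def
    proof
      fix s assume s: "s \<in> \<tau>"
      show "s = {fst (c s), snd (c s)}"
      proof (cases "s \<in> \<sigma>")
        case True
        show ?thesis by (rule pair_eq[of c s "c' s", OF _ orientationD[OF cw(1) True]]) (simp add: c_def True)
      next
        case False
        have cs2: "card s = 2" using s assms(2) by (auto simp: two_subsets_def)
        show ?thesis by (rule pair_eq[of c s "opick s", OF _ opick[OF cs2]]) (simp add: c_def False)
      qed
    qed
    then obtain r where r: "linear_order_on X r" "\<forall>s\<in>\<tau>. c s \<in> r"
      using assms(3) unfolding total_order_flexible_def by blast
    have Wne: "W \<noteq> {}" and Win: "\<forall>w\<in>W. \<exists>s\<in>\<sigma>. snd (c' s) = w \<and> fst (c' s) \<in> W"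
      using cw(2) unfolding good_def by blast+
    have WX: "W \<subseteq> X"
    proof
      fix w assume "w \<in> W"
      then obtain s where s: "s \<in> \<sigma>" "snd (c' s) = w" using Win by blast
      have "snd (c' s) \<in> s" using pair_mem[OF orientationD[OF cw(1) s(1)]] by blast
      moreover have "s \<subseteq> X" using s(1) sP by blast
      ultimately show "w \<in> X" using s(2) by blast
    qed
    have "finite W" using WX assms(1) finite_subset by blast
    obtain m where m: "m \<in> W" "\<forall>w\<in>W. (m,w) \<in> r" using lin_least[OF r(1) \<open>finite W\<close> Wne WX] by blast
    obtain s where s: "s \<in> \<sigma>" "snd (c' s) = m" "fst (c' s) \<in> W" using Win m(1) by blast
    have "c s \<in> r" using r(2) s(1) h by blast
    moreover have "c s = (fst (c' s), m)" using s(1,2) by (simp add: c_def prod_eq_iff)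
    ultimately have um: "(fst (c' s), m) \<in> r" by simp
    have mu: "(m, fst (c' s)) \<in> r" using m(2) s(3) by blast
    have "antisym r" using r(1) unfolding linear_order_on_def partial_order_on_def by blast
    then have eq: "fst (c' s) = m" using antisymD um mu by metis
    have "fst (c' s) \<noteq> snd (c' s)"
      using pair_neq[OF c2[rule_format, OF s(1)] orientationD[OF cw(1) s(1)]] .
    then show False using eq s(2) by simp
  qed
qed

theorem theorem3:
  fixes X :: "'a set" and \<tau> :: "'a set set"
  assumes "finite X" and "\<tau> \<noteq> {}" and "\<tau> \<subseteq> two_subsets X"
  shows "thin \<tau> \<longleftrightarrow> total_order_flexible X \<tau>"
proof
  assume "thin \<tau>"
  then show "total_order_flexible X \<tau>"
    unfolding total_order_flexible_def using dir1[OF assms(1,3)] by blast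
next
  assume "total_order_flexible X \<tau>"
  then show "thin \<tau>" by (rule dir2[OF assms(1,3)])
qed

end
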